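(* Every weakly amenable dual Banach algebra is weakly Connes amenable.
   Context: A dual Banach algebra is a Banach algebra $\mathfrak{A}$ which is the dual of a Banach space $\mathfrak{A}_*$ and whose multiplication is separately $w^*$-continuous. A derivation $D:\mathfrak{A}\to F$ into a Banach $\mathfrak{A}$-bimodule $F$ is a continuous linear map with $D(ab)=D(a)\cdot b+a\cdot D(b)$; it is inner if $D(a)=a\cdot x-x\cdot a$ for some $x\in F$. $\mathfrak{A}$ is weakly amenable if every derivation $\mathfrak{A}\to\mathfrak{A}^*$ is inner. For a Banach $\mathfrak{A}$-bimodule $E$, $\sigma wc(E)$ is the set of $x\in E$ such that $a\mapsto a\cdot x$ and $a\mapsto x\cdot a$ are continuous from $(\mathfrak{A},w^* )$ to $(E,\sigma(E,E^* ))$; it is a closed submodule. Let $j_{\mathfrak{A}}:\mathfrak{A}^*\to\sigma wc(\mathfrak{A})^*$ be the adjoint of the inclusion $\sigma wc(\mathfrak{A})\hookrightarrow\mathfrak{A}$. $\mathfrak{A}$ is weakly Connes amenable if for every derivation $D:\mathfrak{A}\to\mathfrak{A}^*$ such that $j_{\mathfrak{A}}\circ D:\mathfrak{A}\to\sigma wc(\mathfrak{A})^*$ is $w^*$-$w^*$ continuous, the derivation $j_{\mathfrak{A}}\circ D$ is inner. *)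

theory Defs
  imports "HOL-Analysis.Analysis"
begin

text \<open>Scalars are real. A dual Banach algebra is a Banach algebra 'a together with a
predual Banach space 'p and an isometric linear bijection Phi from 'a onto the
dual space 'p \<Rightarrow>L real.\<close>

definition induced_topology :: "'i set \<Rightarrow> ('a \<Rightarrow> 'i \<Rightarrow> real) \<Rightarrow> 'a topology" where
  "induced_topology I ev = pullback_topology UNIV (\<lambda>x. restrict (ev x) I)
      (product_topology (\<lambda>_. euclideanreal) I)"

text \<open>The weak-star topology on 'a, transported along Phi.\<close>
definition wstar_top :: "('a \<Rightarrow> ('p::real_normed_vector \<Rightarrow>\<^sub>L real)) \<Rightarrow> 'a topology" where
  "wstar_top Phi = induced_topology UNIV (\<lambda>a p. blinfun_apply (Phi a) p)"

definition weak_top :: "'a::real_normed_vector topology" where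
  "weak_top = induced_topology (UNIV :: ('a \<Rightarrow>\<^sub>L real) set) (\<lambda>x f. blinfun_apply f x)"

definition dual_banach_algebra ::
  "('a::{real_normed_algebra,banach} \<Rightarrow> ('p::banach \<Rightarrow>\<^sub>L real)) \<Rightarrow> bool" where
  "dual_banach_algebra Phi \<longleftrightarrow>
     linear Phi \<and> bij Phi \<and> (\<forall>a. norm (Phi a) = norm a) \<and>
     (\<forall>a. continuous_map (wstar_top Phi) (wstar_top Phi) (\<lambda>b. a * b)) \<and>
     (\<forall>a. continuous_map (wstar_top Phi) (wstar_top Phi) (\<lambda>b. b * a))"

definition dual_lact :: "'a::real_normed_algebra \<Rightarrow> ('a \<Rightarrow>\<^sub>L real) \<Rightarrow> ('a \<Rightarrow>\<^sub>L real)" where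
  "dual_lact a f = Blinfun (\<lambda>x. f (x * a))"

definition dual_ract :: "('a \<Rightarrow>\<^sub>L real) \<Rightarrow> 'a::real_normed_algebra \<Rightarrow> ('a \<Rightarrow>\<^sub>L real)" where
  "dual_ract f a = Blinfun (\<lambda>x. f (a * x))"

definition dual_derivation :: "('a::real_normed_algebra \<Rightarrow> ('a \<Rightarrow>\<^sub>L real)) \<Rightarrow> bool" where
  "dual_derivation D \<longleftrightarrow> bounded_linear D \<and>
     (\<forall>a b. D (a * b) = dual_ract (D a) b + dual_lact a (D b))"

definition weakly_amenable :: "'a::{real_normed_algebra,banach} itself \<Rightarrow> bool" where
  "weakly_amenable _ \<longleftrightarrow> (\<forall>D :: 'a \<Rightarrow> ('a \<Rightarrow>\<^sub>L real). dual_derivation D \<longrightarrow>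
      (\<exists>f. \<forall>a. D a = dual_lact a f - dual_ract f a))"

definition sigma_wc :: "('a::{real_normed_algebra,banach} \<Rightarrow> ('p::banach \<Rightarrow>\<^sub>L real)) \<Rightarrow> 'a set" where
  "sigma_wc Phi = {x. continuous_map (wstar_top Phi) weak_top (\<lambda>a. a * x) \<and>
                      continuous_map (wstar_top Phi) weak_top (\<lambda>a. x * a)}"

text \<open>Bounded linear functionals on a subspace S (elements of S^*), as functions on 'a
restricted to S.\<close>
definition bounded_linear_on :: "'a::real_normed_vector set \<Rightarrow> ('a \<Rightarrow> real) \<Rightarrow> bool" where
  "bounded_linear_on S phi \<longleftrightarrow>
     (\<forall>x\<in>S. \<forall>y\<in>S. phi (x + y) = phi x + phi y) \<and>
     (\<forall>c. \<forall>x\<in>S. phi (c *\<^sub>R x) = c * phi x) \<and>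
     (\<exists>K. \<forall>x\<in>S. \<bar>phi x\<bar> \<le> K * norm x) \<and>
     (\<forall>x. x \<notin> S \<longrightarrow> phi x = 0)"

text \<open>j_A : A^* \<rightarrow> sigma wc(A)^* is restriction to sigma wc(A); the weak-star topology
of sigma wc(A)^* is generated by evaluations at points of sigma wc(A).\<close>
definition j_map :: "('a::{real_normed_algebra,banach} \<Rightarrow> ('p::banach \<Rightarrow>\<^sub>L real)) \<Rightarrow>
    ('a \<Rightarrow>\<^sub>L real) \<Rightarrow> ('a \<Rightarrow> real)" where
  "j_map Phi f = restrict (blinfun_apply f) (sigma_wc Phi)"

definition sigma_wc_dual_wstar ::
    "('a::{real_normed_algebra,banach} \<Rightarrow> ('p::banach \<Rightarrow>\<^sub>L real)) \<Rightarrow> ('a \<Rightarrow> real) topology" where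
  "sigma_wc_dual_wstar Phi = induced_topology (sigma_wc Phi) (\<lambda>phi s. phi s)"

definition weakly_Connes_amenable ::
    "('a::{real_normed_algebra,banach} \<Rightarrow> ('p::banach \<Rightarrow>\<^sub>L real)) \<Rightarrow> bool" where
  "weakly_Connes_amenable Phi \<longleftrightarrow>
     (\<forall>D :: 'a \<Rightarrow> ('a \<Rightarrow>\<^sub>L real). dual_derivation D \<and>
        continuous_map (wstar_top Phi) (sigma_wc_dual_wstar Phi) (\<lambda>a. j_map Phi (D a)) \<longrightarrow>
        (\<exists>phi. bounded_linear_on (sigma_wc Phi) phi \<and>
           (\<forall>a. \<forall>s\<in>sigma_wc Phi. j_map Phi (D a) s = phi (s * a) - phi (a * s))))"

end

theory Submission
  imports Defs
begin

lemma weak_proj: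
  fixes g :: "'a::real_normed_vector \<Rightarrow>\<^sub>L real"
  shows "continuous_map weak_top euclideanreal (\<lambda>x. blinfun_apply g x)"
proof -
  have "continuous_map (pullback_topology UNIV (\<lambda>x. restrict (\<lambda>f. blinfun_apply f x) (UNIV :: ('a \<Rightarrow>\<^sub>L real) set))
      (product_topology (\<lambda>_. euclideanreal) UNIV)) euclideanreal
      ((\<lambda>h. h g) \<circ> (\<lambda>x. restrict (\<lambda>f. blinfun_apply f x) (UNIV :: ('a \<Rightarrow>\<^sub>L real) set)))"
    by (rule continuous_map_pullback) (rule continuous_map_product_projection, simp)
  then show ?thesis unfolding weak_top_def induced_topology_def by (simp add: o_def)
qed

lemma weak_into:
  fixes h :: "'b \<Rightarrow> 'a::real_normed_vector"
  assumes "\<And>g :: 'a \<Rightarrow>\<^sub>L real. continuous_map X euclideanreal (\<lambda>x. blinfun_apply g (h x))"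
  shows "continuous_map X weak_top h"
  unfolding weak_top_def induced_topology_def
  apply (rule continuous_map_pullback')
   apply (simp add: o_def continuous_map_componentwise_UNIV assms)
  apply simp
  done

lemma weak_rmult:
  fixes a :: "'a::real_normed_algebra"
  shows "continuous_map weak_top weak_top (\<lambda>x. x * a)"
proof (rule weak_into)
  fix g :: "'a \<Rightarrow>\<^sub>L real"
  have bl: "bounded_linear (\<lambda>x. g (x * a))"
    by (rule bounded_linear_compose[OF blinfun.bounded_linear_right bounded_linear_mult_left])
  have "continuous_map weak_top euclideanreal (\<lambda>x. blinfun_apply (Blinfun (\<lambda>x. g (x * a))) x)"
    by (rule weak_proj)
  then show "continuous_map weak_top euclideanreal (\<lambda>x. g (x * a))"
    using bl by (simp add: bounded_linear_Blinfun_apply)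
qed

lemma weak_lmult:
  fixes a :: "'a::real_normed_algebra"
  shows "continuous_map weak_top weak_top (\<lambda>x. a * x)"
proof (rule weak_into)
  fix g :: "'a \<Rightarrow>\<^sub>L real"
  have bl: "bounded_linear (\<lambda>x. g (a * x))"
    by (rule bounded_linear_compose[OF blinfun.bounded_linear_right bounded_linear_mult_right])
  have "continuous_map weak_top euclideanreal (\<lambda>x. blinfun_apply (Blinfun (\<lambda>x. g (a * x))) x)"
    by (rule weak_proj)
  then show "continuous_map weak_top euclideanreal (\<lambda>x. g (a * x))"
    using bl by (simp add: bounded_linear_Blinfun_apply)
qed

lemma weak_add:
  fixes h1 h2 :: "'b \<Rightarrow> 'a::real_normed_vector"
  assumes "continuous_map X weak_top h1" "continuous_map X weak_top h2"
  shows "continuous_map X weak_top (\<lambda>b. h1 b + h2 b)"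
proof (rule weak_into)
  fix g :: "'a \<Rightarrow>\<^sub>L real"
  have "continuous_map X euclideanreal (\<lambda>b. g (h1 b) + g (h2 b))"
    by (rule continuous_map_add[OF continuous_map_compose[OF assms(1) weak_proj, unfolded o_def]
        continuous_map_compose[OF assms(2) weak_proj, unfolded o_def]])
  then show "continuous_map X euclideanreal (\<lambda>b. g (h1 b + h2 b))"
    by (simp add: blinfun.add_right)
qed

lemma weak_scale:
  fixes h1 :: "'b \<Rightarrow> 'a::real_normed_vector"
  assumes "continuous_map X weak_top h1"
  shows "continuous_map X weak_top (\<lambda>b. c *\<^sub>R h1 b)"
proof (rule weak_into)
  fix g :: "'a \<Rightarrow>\<^sub>L real"
  have "continuous_map X euclideanreal (\<lambda>b. c * g (h1 b))"
    by (rule continuous_map_real_mult_left[OF continuous_map_compose[OF assms(1) weak_proj, unfolded o_def]])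
  then show "continuous_map X euclideanreal (\<lambda>b. g (c *\<^sub>R h1 b))"
    by (simp add: blinfun.scaleR_right)
qed

lemma sigma_wc_sub:
  assumes "x \<in> sigma_wc Phi" "y \<in> sigma_wc Phi"
  shows "x + y \<in> sigma_wc Phi" "c *\<^sub>R x \<in> sigma_wc Phi"
proof -
  from assms have x1: "continuous_map (wstar_top Phi) weak_top (\<lambda>a. a * x)"
    and x2: "continuous_map (wstar_top Phi) weak_top (\<lambda>a. x * a)"
    and y1: "continuous_map (wstar_top Phi) weak_top (\<lambda>a. a * y)"
    and y2: "continuous_map (wstar_top Phi) weak_top (\<lambda>a. y * a)"
    unfolding sigma_wc_def by auto
  have e1: "(\<lambda>a. a * (x + y)) = (\<lambda>a. a * x + a * y)" by (rule ext) (rule distrib_left)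
  have e2: "(\<lambda>a. (x + y) * a) = (\<lambda>a. x * a + y * a)" by (rule ext) (rule distrib_right)
  have e3: "(\<lambda>a. a * (c *\<^sub>R x)) = (\<lambda>a. c *\<^sub>R (a * x))" by (rule ext) (rule mult_scaleR_right)
  have e4: "(\<lambda>a. (c *\<^sub>R x) * a) = (\<lambda>a. c *\<^sub>R (x * a))" by (rule ext) (rule mult_scaleR_left)
  show "x + y \<in> sigma_wc Phi"
    unfolding sigma_wc_def mem_Collect_eq e1 e2 using weak_add[OF x1 y1] weak_add[OF x2 y2] by blast
  show "c *\<^sub>R x \<in> sigma_wc Phi"
    unfolding sigma_wc_def mem_Collect_eq e3 e4 using weak_scale[OF x1] weak_scale[OF x2] by blast
qed

lemma sigma_wc_closed:
  assumes dba: "dual_banach_algebra Phi" and s: "s \<in> sigma_wc Phi"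
  shows "s * a \<in> sigma_wc Phi" "a * s \<in> sigma_wc Phi"
proof -
  from s have s1: "continuous_map (wstar_top Phi) weak_top (\<lambda>b. b * s)"
    and s2: "continuous_map (wstar_top Phi) weak_top (\<lambda>b. s * b)"
    unfolding sigma_wc_def by auto
  from dba have l: "\<And>a. continuous_map (wstar_top Phi) (wstar_top Phi) (\<lambda>b. a * b)"
    and r: "\<And>a. continuous_map (wstar_top Phi) (wstar_top Phi) (\<lambda>b. b * a)"
    unfolding dual_banach_algebra_def by auto
  have c1: "continuous_map (wstar_top Phi) weak_top ((\<lambda>x. x * a) \<circ> (\<lambda>b. b * s))"
    by (rule continuous_map_compose[OF s1 weak_rmult])
  have c2: "continuous_map (wstar_top Phi) weak_top ((\<lambda>b. s * b) \<circ> (\<lambda>b. a * b))"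
    by (rule continuous_map_compose[OF l s2])
  have e1: "(\<lambda>x. x * a) \<circ> (\<lambda>b. b * s) = (\<lambda>b. b * (s * a))"
    by (rule ext) (simp only: o_apply mult.assoc)
  have e2: "(\<lambda>b. s * b) \<circ> (\<lambda>b. a * b) = (\<lambda>b. (s * a) * b)"
    by (rule ext) (simp only: o_apply mult.assoc)
  show "s * a \<in> sigma_wc Phi"
    unfolding sigma_wc_def mem_Collect_eq using c1 c2 unfolding e1 e2 by (rule conjI)
  have c3: "continuous_map (wstar_top Phi) weak_top ((\<lambda>b. b * s) \<circ> (\<lambda>b. b * a))"
    by (rule continuous_map_compose[OF r s1])
  have c4: "continuous_map (wstar_top Phi) weak_top ((\<lambda>x. a * x) \<circ> (\<lambda>b. s * b))"
    by (rule continuous_map_compose[OF s2 weak_lmult])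
  have e3: "(\<lambda>b. b * s) \<circ> (\<lambda>b. b * a) = (\<lambda>b. b * (a * s))"
    by (rule ext) (simp only: o_apply mult.assoc)
  have e4: "(\<lambda>x. a * x) \<circ> (\<lambda>b. s * b) = (\<lambda>b. (a * s) * b)"
    by (rule ext) (simp only: o_apply mult.assoc)
  show "a * s \<in> sigma_wc Phi"
    unfolding sigma_wc_def mem_Collect_eq using c3 c4 unfolding e3 e4 by (rule conjI)
qed

theorem theorem3p6:
  fixes Phi :: "'a::{real_normed_algebra,banach} \<Rightarrow> ('p::banach \<Rightarrow>\<^sub>L real)"
  assumes "dual_banach_algebra Phi"
    and "weakly_amenable TYPE('a)"
  shows "weakly_Connes_amenable Phi"
  unfolding weakly_Connes_amenable_def
proof (intro allI impI)
  fix D :: "'a \<Rightarrow> ('a \<Rightarrow>\<^sub>L real)"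
  assume "dual_derivation D \<and>
        continuous_map (wstar_top Phi) (sigma_wc_dual_wstar Phi) (\<lambda>a. j_map Phi (D a))"
  then have "dual_derivation D" by simp
  with assms(2) obtain f where f: "\<And>a. D a = dual_lact a f - dual_ract f a"
    unfolding weakly_amenable_def by blast
  define S where "S = sigma_wc Phi"
  define phi where "phi x = (if x \<in> S then blinfun_apply f x else 0)" for x
  have blr: "\<And>a. bounded_linear (\<lambda>x. f (x * a))"
    by (rule bounded_linear_compose[OF blinfun.bounded_linear_right bounded_linear_mult_left])
  have bll: "\<And>a. bounded_linear (\<lambda>x. f (a * x))"
    by (rule bounded_linear_compose[OF blinfun.bounded_linear_right bounded_linear_mult_right])
  have Da: "\<And>a x. D a x = f (x * a) - f (a * x)"
    using f blr bll by (simp add: dual_lact_def dual_ract_def bounded_linear_Blinfun_apply blinfun.diff_left)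
  have "bounded_linear_on S phi"
    unfolding bounded_linear_on_def phi_def
  proof (intro conjI ballI allI impI)
    show "\<exists>K. \<forall>x\<in>S. \<bar>(if x \<in> S then blinfun_apply f x else 0)\<bar> \<le> K * norm x"
      proof (rule exI[of _ "norm f"], intro ballI)
      fix x :: 'a
      have "norm (blinfun_apply f x) \<le> norm f * norm x" by (rule norm_blinfun)
      then show "\<bar>(if x \<in> S then blinfun_apply f x else 0)\<bar> \<le> norm f * norm x"
        by (simp add: real_norm_def)
    qed
  qed (simp_all add: blinfun.add_right blinfun.scaleR_right S_def sigma_wc_sub)
  moreover have "\<forall>a. \<forall>s\<in>S. j_map Phi (D a) s = phi (s * a) - phi (a * s)"
    using sigma_wc_closed[OF assms(1)] unfolding S_def phi_def j_map_def
    by (simp add: Da)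
  ultimately show "\<exists>phi. bounded_linear_on (sigma_wc Phi) phi \<and>
           (\<forall>a. \<forall>s\<in>sigma_wc Phi. j_map Phi (D a) s = phi (s * a) - phi (a * s))"
    unfolding S_def by blast
qed

end
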